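(* Let $\Omega\subset\mathbb R^N$ be an open bounded set with $C^{1,1}$ boundary and let $\beta>0$. Then the quantity \[ \lambda_m=\inf_{(v,h)\in H^1(\Omega)\times\mathcal H_m(\partial\Omega),\ v\not\equiv0}\frac{\int_\Omega|\nabla v|^2dx+\beta\int_{\partial\Omega}\frac{v^2}{1+\beta h}\,d\mathcal H^{N-1}}{\int_\Omega v^2dx} \] is a decreasing function of $m>0$.
   Context: For $m\ge 0$, $\mathcal H_m(\partial\Omega)=\{h\in L^1(\partial\Omega): h\ge 0,\ \int_{\partial\Omega}h\,d\mathcal H^{N-1}=m\}$. Boundary values of $v$ are traces. *)

theory Defs
  imports "HOL-Analysis.Analysis"
begin

definition hausdorff_pre :: "nat \<Rightarrow> real \<Rightarrow> 'a::metric_space set \<Rightarrow> ennreal" where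
  "hausdorff_pre s \<delta> A =
     (INF C \<in> {C :: nat \<Rightarrow> 'a set. A \<subseteq> (\<Union>i. C i) \<and> (\<forall>i. bounded (C i) \<and> diameter (C i) \<le> \<delta>)}.
        (\<Sum>i. ennreal (if C i = {} then 0 else unit_ball_vol (real s) * (diameter (C i) / 2) ^ s)))"

definition hausdorff_outer :: "nat \<Rightarrow> 'a::metric_space set \<Rightarrow> ennreal" where
  "hausdorff_outer s A = (SUP \<delta> \<in> {0<..}. hausdorff_pre s \<delta> A)"

definition hausdorff_measure :: "nat \<Rightarrow> 'a::metric_space measure" where
  "hausdorff_measure s = measure_of UNIV (sets borel) (hausdorff_outer s)"

definition surface_measure :: "'a::euclidean_space set \<Rightarrow> 'a measure" where
  "surface_measure \<Omega> = restrict_space (hausdorff_measure (DIM('a) - 1)) (frontier \<Omega>)"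

text \<open>C^{1,1} boundary: near every boundary point, Omega is locally the subgraph
  of a C^1 function with Lipschitz gradient, over the hyperplane orthogonal to a unit
  vector e (the function is evaluated on the orthogonal projection onto that hyperplane).\<close>
definition C11_boundary :: "'a::euclidean_space set \<Rightarrow> bool" where
  "C11_boundary \<Omega> \<longleftrightarrow>
     (\<forall>x\<in>frontier \<Omega>. \<exists>r>0. \<exists>e::'a. \<exists>\<phi>::'a \<Rightarrow> real. \<exists>D\<phi>::'a \<Rightarrow> 'a. \<exists>L.
        norm e = 1 \<and>
        (\<forall>y. (\<phi> has_derivative (\<lambda>k. D\<phi> y \<bullet> k)) (at y)) \<and>
        (\<forall>y z. norm (D\<phi> y - D\<phi> z) \<le> L * norm (y - z)) \<and>
        \<Omega> \<inter> ball x r = {y \<in> ball x r. y \<bullet> e < \<phi> (y - (y \<bullet> e) *\<^sub>R e)})"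

definition weak_gradient :: "'a::euclidean_space set \<Rightarrow> ('a \<Rightarrow> real) \<Rightarrow> ('a \<Rightarrow> 'a) \<Rightarrow> bool" where
  "weak_gradient \<Omega> v G \<longleftrightarrow>
     (\<forall>\<phi> :: 'a \<Rightarrow> real. \<forall>D\<phi> :: 'a \<Rightarrow> 'a. \<forall>K.
        (\<forall>y. (\<phi> has_derivative (\<lambda>k. D\<phi> y \<bullet> k)) (at y)) \<and> continuous_on UNIV D\<phi> \<and>
        compact K \<and> K \<subseteq> \<Omega> \<and> (\<forall>y. y \<notin> K \<longrightarrow> \<phi> y = 0)
        \<longrightarrow> (\<forall>i\<in>Basis. (LINT y:\<Omega>|lebesgue. v y * (D\<phi> y \<bullet> i)) = - (LINT y:\<Omega>|lebesgue. (G y \<bullet> i) * \<phi> y)))"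

definition H1_with_gradient :: "'a::euclidean_space set \<Rightarrow> ('a \<Rightarrow> real) \<Rightarrow> ('a \<Rightarrow> 'a) \<Rightarrow> bool" where
  "H1_with_gradient \<Omega> v G \<longleftrightarrow>
     set_borel_measurable lebesgue \<Omega> v \<and> set_integrable lebesgue \<Omega> (\<lambda>y. (v y)\<^sup>2) \<and>
     set_borel_measurable lebesgue \<Omega> G \<and> set_integrable lebesgue \<Omega> (\<lambda>y. (norm (G y))\<^sup>2) \<and>
     weak_gradient \<Omega> v G"

definition is_trace :: "'a::euclidean_space set \<Rightarrow> ('a \<Rightarrow> real) \<Rightarrow> ('a \<Rightarrow> 'a) \<Rightarrow> ('a \<Rightarrow> real) \<Rightarrow> bool" where
  "is_trace \<Omega> v G g \<longleftrightarrow>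
     g \<in> borel_measurable (surface_measure \<Omega>) \<and>
     integrable (surface_measure \<Omega>) (\<lambda>y. (g y)\<^sup>2) \<and>
     (\<exists>u :: nat \<Rightarrow> 'a \<Rightarrow> real. \<exists>Du :: nat \<Rightarrow> 'a \<Rightarrow> 'a.
        (\<forall>n y. (u n has_derivative (\<lambda>k. Du n y \<bullet> k)) (at y)) \<and> (\<forall>n. continuous_on UNIV (Du n)) \<and>
        (\<lambda>n. \<integral>\<^sup>+ y\<in>\<Omega>. ennreal ((u n y - v y)\<^sup>2) \<partial>lebesgue) \<longlonglongrightarrow> 0 \<and>
        (\<lambda>n. \<integral>\<^sup>+ y\<in>\<Omega>. ennreal ((norm (Du n y - G y))\<^sup>2) \<partial>lebesgue) \<longlonglongrightarrow> 0 \<and>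
        (\<lambda>n. \<integral>\<^sup>+ y. ennreal ((u n y - g y)\<^sup>2) \<partial>surface_measure \<Omega>) \<longlonglongrightarrow> 0)"

definition Hm :: "'a::euclidean_space set \<Rightarrow> real \<Rightarrow> ('a \<Rightarrow> real) set" where
  "Hm \<Omega> m = {h. integrable (surface_measure \<Omega>) h \<and> (\<forall>y\<in>frontier \<Omega>. h y \<ge> 0) \<and>
                  (\<integral>y. h y \<partial>surface_measure \<Omega>) = m}"

definition lambda_m :: "'a::euclidean_space set \<Rightarrow> real \<Rightarrow> real \<Rightarrow> real" where
  "lambda_m \<Omega> \<beta> m = Inf {Q. \<exists>v G g h.
       H1_with_gradient \<Omega> v G \<and> is_trace \<Omega> v G g \<and> h \<in> Hm \<Omega> m \<and>
       (LINT y:\<Omega>|lebesgue. (v y)\<^sup>2) > 0 \<and>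
       Q = ((LINT y:\<Omega>|lebesgue. (norm (G y))\<^sup>2)
             + \<beta> * (\<integral>y. (g y)\<^sup>2 / (1 + \<beta> * h y) \<partial>surface_measure \<Omega>))
           / (LINT y:\<Omega>|lebesgue. (v y)\<^sup>2)}"

end

theory Submission
  imports Defs
begin

lemma space_surface: "space (surface_measure \<Omega>) = frontier \<Omega>"
  unfolding surface_measure_def hausdorff_measure_def
  by (simp add: space_restrict_space space_measure_of_conv)

lemma int_bound:
  assumes g: "g \<in> borel_measurable (surface_measure \<Omega>)"
    and g2: "integrable (surface_measure \<Omega>) (\<lambda>y. (g y)\<^sup>2)"
    and h: "integrable (surface_measure \<Omega>) h" and hnn: "\<forall>y\<in>frontier \<Omega>. h y \<ge> 0"
    and b: "(\<beta>::real) > 0"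
  shows "integrable (surface_measure \<Omega>) (\<lambda>y. (g y)\<^sup>2 / (1 + \<beta> * h y))"
proof (rule Bochner_Integration.integrable_bound[OF g2])
  show "(\<lambda>y. (g y)\<^sup>2 / (1 + \<beta> * h y)) \<in> borel_measurable (surface_measure \<Omega>)"
    using g borel_measurable_integrable[OF h] by measurable
  show "AE x in surface_measure \<Omega>. norm ((g x)\<^sup>2 / (1 + \<beta> * h x)) \<le> norm ((g x)\<^sup>2)"
  proof (rule AE_I2)
    fix x assume "x \<in> space (surface_measure \<Omega>)"
    then have "h x \<ge> 0" using hnn space_surface by auto
    then have "1 \<le> 1 + \<beta> * h x" using b by simp
    have "(g x)\<^sup>2 / (1 + \<beta> * h x) \<le> (g x)\<^sup>2 / 1"
      using \<open>1 \<le> 1 + \<beta> * h x\<close> by (intro divide_left_mono) auto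
    moreover have "0 \<le> (g x)\<^sup>2 / (1 + \<beta> * h x)" using \<open>1 \<le> 1 + \<beta> * h x\<close> by simp
    ultimately show "norm ((g x)\<^sup>2 / (1 + \<beta> * h x)) \<le> norm ((g x)\<^sup>2)"
      using \<open>1 \<le> 1 + \<beta> * h x\<close> by simp
  qed
qed

lemma transfer_elem:
  assumes b: "(\<beta>::real) > 0" and m: "m1 > 0" "m2 > 0"
    and H: "H1_with_gradient \<Omega> v G" and T: "is_trace \<Omega> v G g" and hm: "h \<in> Hm \<Omega> m1"
    and pos: "(LINT y:\<Omega>|lebesgue. (v y)\<^sup>2) > 0"
  shows "\<exists>Q' \<in> {Q. \<exists>v G g h.
       H1_with_gradient \<Omega> v G \<and> is_trace \<Omega> v G g \<and> h \<in> Hm \<Omega> m2 \<and>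
       (LINT y:\<Omega>|lebesgue. (v y)\<^sup>2) > 0 \<and>
       Q = ((LINT y:\<Omega>|lebesgue. (norm (G y))\<^sup>2)
             + \<beta> * (\<integral>y. (g y)\<^sup>2 / (1 + \<beta> * h y) \<partial>surface_measure \<Omega>))
           / (LINT y:\<Omega>|lebesgue. (v y)\<^sup>2)}.
     (m1 \<le> m2 \<longrightarrow> Q' \<le> ((LINT y:\<Omega>|lebesgue. (norm (G y))\<^sup>2)
             + \<beta> * (\<integral>y. (g y)\<^sup>2 / (1 + \<beta> * h y) \<partial>surface_measure \<Omega>))
           / (LINT y:\<Omega>|lebesgue. (v y)\<^sup>2))"
proof -
  define c where "c = m2 / m1"
  have c: "c > 0" using m by (simp add: c_def)
  define h' where "h' = (\<lambda>y. c * h y)"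
  have hi: "integrable (surface_measure \<Omega>) h" and hnn: "\<forall>y\<in>frontier \<Omega>. h y \<ge> 0"
    and hint: "(\<integral>y. h y \<partial>surface_measure \<Omega>) = m1" using hm by (auto simp: Hm_def)
  have h'm: "h' \<in> Hm \<Omega> m2"
    unfolding Hm_def h'_def using hi hnn hint c m by (simp add: c_def)
  have h'i: "integrable (surface_measure \<Omega>) h'" and h'nn: "\<forall>y\<in>frontier \<Omega>. h' y \<ge> 0"
    using h'm by (auto simp: Hm_def)
  have gm: "g \<in> borel_measurable (surface_measure \<Omega>)"
    and g2: "integrable (surface_measure \<Omega>) (\<lambda>y. (g y)\<^sup>2)" using T by (auto simp: is_trace_def)
  have I1: "integrable (surface_measure \<Omega>) (\<lambda>y. (g y)\<^sup>2 / (1 + \<beta> * h y))"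
    using int_bound[OF gm g2 hi hnn b] .
  have I2: "integrable (surface_measure \<Omega>) (\<lambda>y. (g y)\<^sup>2 / (1 + \<beta> * h' y))"
    using int_bound[OF gm g2 h'i h'nn b] .
  show ?thesis
  proof (rule bexI[where x = "((LINT y:\<Omega>|lebesgue. (norm (G y))\<^sup>2)
             + \<beta> * (\<integral>y. (g y)\<^sup>2 / (1 + \<beta> * h' y) \<partial>surface_measure \<Omega>))
           / (LINT y:\<Omega>|lebesgue. (v y)\<^sup>2)"], intro impI)
    assume le: "m1 \<le> m2"
    then have c1: "c \<ge> 1" using m by (simp add: c_def)
    have "(\<integral>y. (g y)\<^sup>2 / (1 + \<beta> * h' y) \<partial>surface_measure \<Omega>)
        \<le> (\<integral>y. (g y)\<^sup>2 / (1 + \<beta> * h y) \<partial>surface_measure \<Omega>)"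
    proof (rule integral_mono[OF I2 I1])
      fix x assume "x \<in> space (surface_measure \<Omega>)"
      then have hx: "h x \<ge> 0" using hnn space_surface by auto
      have "h x \<le> c * h x" using c1 hx by (simp add: mult_le_cancel_right1)
      then have "\<beta> * h x \<le> \<beta> * (c * h x)" using b by simp
      moreover have "0 < 1 + \<beta> * h x" using b hx by (simp add: add_pos_nonneg)
      ultimately show "(g x)\<^sup>2 / (1 + \<beta> * h' x) \<le> (g x)\<^sup>2 / (1 + \<beta> * h x)"
        unfolding h'_def by (intro divide_left_mono) auto
    qed
    then show "((LINT y:\<Omega>|lebesgue. (norm (G y))\<^sup>2)
             + \<beta> * (\<integral>y. (g y)\<^sup>2 / (1 + \<beta> * h' y) \<partial>surface_measure \<Omega>))
           / (LINT y:\<Omega>|lebesgue. (v y)\<^sup>2) \<le> ((LINT y:\<Omega>|lebesgue. (norm (G y))\<^sup>2)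
             + \<beta> * (\<integral>y. (g y)\<^sup>2 / (1 + \<beta> * h y) \<partial>surface_measure \<Omega>))
           / (LINT y:\<Omega>|lebesgue. (v y)\<^sup>2)"
      using pos b by (intro divide_right_mono) auto
  qed (use H T h'm pos in blast)
qed

lemma Q_nonneg:
  assumes b: "(\<beta>::real) > 0" and T: "is_trace \<Omega> v G g" and hm: "h \<in> Hm \<Omega> m"
  shows "0 \<le> ((LINT y:\<Omega>|lebesgue. (norm (G y))\<^sup>2)
             + \<beta> * (\<integral>y. (g y)\<^sup>2 / (1 + \<beta> * h y) \<partial>surface_measure \<Omega>))
           / (LINT y:\<Omega>|lebesgue. (v y)\<^sup>2)"
proof -
  have hnn: "\<forall>y\<in>frontier \<Omega>. h y \<ge> 0" using hm by (auto simp: Hm_def)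
  have a: "0 \<le> (LINT y:\<Omega>|lebesgue. (norm (G y))\<^sup>2)"
    unfolding set_lebesgue_integral_def by (rule Bochner_Integration.integral_nonneg) (simp add: indicator_def split: split_indicator)
  have c: "0 \<le> (LINT y:\<Omega>|lebesgue. (v y)\<^sup>2)"
    unfolding set_lebesgue_integral_def by (rule Bochner_Integration.integral_nonneg) (simp add: indicator_def split: split_indicator)
  have d: "0 \<le> (\<integral>y. (g y)\<^sup>2 / (1 + \<beta> * h y) \<partial>surface_measure \<Omega>)"
  proof (rule Bochner_Integration.integral_nonneg)
    fix x assume "x \<in> space (surface_measure \<Omega>)"
    then have "h x \<ge> 0" using hnn space_surface by auto
    then show "0 \<le> (g x)\<^sup>2 / (1 + \<beta> * h x)" using b by (simp add: add_nonneg_nonneg)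
  qed
  show ?thesis using a c d b by simp
qed

theorem proposition3p8:
  fixes \<Omega> :: "'a::euclidean_space set" and \<beta> :: real
  assumes "open \<Omega>" and "bounded \<Omega>" and "C11_boundary \<Omega>" and "\<beta> > 0"
  shows "\<forall>m1 m2. 0 < m1 \<and> m1 \<le> m2 \<longrightarrow> lambda_m \<Omega> \<beta> m2 \<le> lambda_m \<Omega> \<beta> m1"
proof (intro allI impI)
  fix m1 m2 :: real assume mm: "0 < m1 \<and> m1 \<le> m2"
  have b: "\<beta> > 0" using assms by simp
  define S where "S = (\<lambda>m. {Q. \<exists>v G g h.
       H1_with_gradient \<Omega> v G \<and> is_trace \<Omega> v G g \<and> h \<in> Hm \<Omega> m \<and>
       (LINT y:\<Omega>|lebesgue. (v y)\<^sup>2) > 0 \<and>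
       Q = ((LINT y:\<Omega>|lebesgue. (norm (G y))\<^sup>2)
             + \<beta> * (\<integral>y. (g y)\<^sup>2 / (1 + \<beta> * h y) \<partial>surface_measure \<Omega>))
           / (LINT y:\<Omega>|lebesgue. (v y)\<^sup>2)})"
  have L: "lambda_m \<Omega> \<beta> m = Inf (S m)" for m unfolding lambda_m_def S_def by simp
  have m1: "m1 > 0" and m2: "m2 > 0" using mm by auto
  have step: "\<And>Q. Q \<in> S ma \<Longrightarrow> ma > 0 \<Longrightarrow> mb > 0 \<Longrightarrow> \<exists>Q'\<in>S mb. (ma \<le> mb \<longrightarrow> Q' \<le> Q)" for ma mb
    unfolding S_def using transfer_elem[OF b] by blast
  show "lambda_m \<Omega> \<beta> m2 \<le> lambda_m \<Omega> \<beta> m1"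
  proof (cases "S m1 = {}")
    case True
    have "S m2 = {}"
    proof (rule ccontr)
      assume "S m2 \<noteq> {}" then obtain Q where "Q \<in> S m2" by blast
      from step[OF this m2 m1] True show False by blast
    qed
    then show ?thesis using True L by simp
  next
    case False
    have bdd: "bdd_below (S m2)"
      unfolding bdd_below_def S_def using Q_nonneg[OF b] by blast
    have "Inf (S m2) \<le> Inf (S m1)"
      by (rule cInf_mono[OF False bdd]) (use step[OF _ m1 m2] mm in blast)
    then show ?thesis using L by simp
  qed
qed

end
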